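(* Let $k\geq 1$ and let $x_1,\ldots,x_k$ be an arrangement of $1,\ldots,k$. Let $p$ be the POP of length $k$ defined by the relations $x_1>x_j$ for all $2\leq j\leq k$ (and no other relations), and let $a(n)=|S_n(p)|$. Then $a(n)=n!$ for $n<k$ and $a(n)=(k-1)!\,(k-1)^{n-k+1}$ for $n\geq k$. Equivalently, $$\sum_{n\geq 0}a(n)x^n=\frac{(k-1)(k-1)!\,x^k}{1-(k-1)x}+\sum_{i=0}^{k-1}i!\,x^i.$$
   Context: An $n$-permutation is a word $\pi=\pi_1\cdots\pi_n$ containing each of $1,\ldots,n$ exactly once; $S_n$ is the set of $n$-permutations ($S_0$ consists of the empty permutation). A partially ordered pattern (POP) $p$ of length $k$ is a partial order on the label set $\{1,\ldots,k\}$; it is described by a set of generating relations, where a relation $x>y$ means that in an occurrence the entry in the $x$-th chosen position must be larger than the entry in the $y$-th chosen position, and labels not involved in any relation are unconstrained. An $n$-permutation $\pi$ contains $p$ if there are indices $1\leq i_1<\cdots<i_k\leq n$ such that $\pi_{i_x}>\pi_{i_y}$ whenever $x>y$ in the partial order; otherwise $\pi$ avoids $p$. $S_n(p)$ denotes the set of $n$-permutations avoiding $p$. *)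

theory Defs
  imports Main "HOL-Combinatorics.Multiset_Permutations"
begin

text \<open>A POP of length k is given by a set R of generating relations (x,y) meaning "x > y",
  on labels 1..k.  pi contains the POP if there are positions i_1 < ... < i_k
  (0-based, below length pi) such that pi_{i_x} > pi_{i_y} whenever (x,y) in R.\<close>

definition contains_pop :: "nat list \<Rightarrow> nat \<Rightarrow> (nat \<times> nat) set \<Rightarrow> bool" where
  "contains_pop \<pi> k R \<longleftrightarrow>
     (\<exists>i :: nat \<Rightarrow> nat. strict_mono_on {1..k} i \<and> (\<forall>x\<in>{1..k}. i x < length \<pi>) \<and>
        (\<forall>(x, y)\<in>R. \<pi> ! (i x) > \<pi> ! (i y)))"

definition avoiders :: "nat \<Rightarrow> nat \<Rightarrow> (nat \<times> nat) set \<Rightarrow> nat list set" where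
  "avoiders n k R = {\<pi> \<in> permutations_of_set {1..n}. \<not> contains_pop \<pi> k R}"

end

theory Submission
  imports Defs
begin

definition Bad :: "nat \<Rightarrow> nat \<Rightarrow> nat list \<Rightarrow> bool" where
  "Bad a b ps \<longleftrightarrow> (\<exists>us w vs. ps = us @ w # vs \<and> a \<le> card {u\<in>set us. u < w}
      \<and> b \<le> card {u\<in>set vs. u < w})"

lemma char1:
  assumes d: "distinct ps" and m: "1 \<le> m" "m \<le> k"
    and c: "contains_pop ps k ({m} \<times> ({1..k} - {m}))"
  shows "Bad (m - 1) (k - m) ps"
proof -
  obtain i where sm: "strict_mono_on {1..k} i" and lt: "\<forall>x\<in>{1..k}. i x < length ps"
    and rel: "\<forall>(x, y)\<in>{m} \<times> ({1..k} - {m}). ps ! (i x) > ps ! (i y)"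
    using c unfolding contains_pop_def by blast
  define p where "p = i m"
  have pl: "p < length ps" using lt m p_def by auto
  define us where "us = take p ps"
  define w where "w = ps ! p"
  define vs where "vs = drop (Suc p) ps"
  have eq: "ps = us @ w # vs" using id_take_nth_drop[OF pl] us_def w_def vs_def by simp
  have inj: "inj_on (\<lambda>t. ps ! (i t)) {1..k}"
  proof -
    have "inj_on i {1..k}" using sm by (rule strict_mono_on_imp_inj_on)
    moreover have "inj_on ((!) ps) (i ` {1..k})" using inj_on_nth[OF d] lt by auto
    ultimately show ?thesis using comp_inj_on[of i "{1..k}" "(!) ps"] by (simp add: o_def)
  qed
  have L: "(\<lambda>t. ps ! (i t)) ` {1..<m} \<subseteq> {u\<in>set us. u < w}"
  proof
    fix u assume "u \<in> (\<lambda>t. ps ! (i t)) ` {1..<m}"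
    then obtain t where t: "t \<in> {1..<m}" "u = ps ! (i t)" by auto
    have "i t < p" using sm t m unfolding p_def by (auto intro: strict_mono_onD)
    hence "u = us ! (i t)" "i t < length us" using t pl unfolding us_def by auto
    hence "u \<in> set us" by simp
    moreover have "u < w" using rel t m unfolding w_def p_def by auto
    ultimately show "u \<in> {u\<in>set us. u < w}" by simp
  qed
  have R: "(\<lambda>t. ps ! (i t)) ` {m<..k} \<subseteq> {u\<in>set vs. u < w}"
  proof
    fix u assume "u \<in> (\<lambda>t. ps ! (i t)) ` {m<..k}"
    then obtain t where t: "t \<in> {m<..k}" "u = ps ! (i t)" by auto
    have "i t > p" using sm t m unfolding p_def by (auto intro: strict_mono_onD)
    moreover have "i t < length ps" using lt t m by auto
    ultimately have "u = vs ! (i t - Suc p)" "i t - Suc p < length vs" using t unfolding vs_def by auto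
    hence "u \<in> set vs" by simp
    moreover have "u < w" using rel t m unfolding w_def p_def by auto
    ultimately show "u \<in> {u\<in>set vs. u < w}" by simp
  qed
  have "card ((\<lambda>t. ps ! (i t)) ` {1..<m}) = m - 1"
    using inj m by (subst card_image) (auto intro: inj_on_subset)
  moreover have "card ((\<lambda>t. ps ! (i t)) ` {1..<m}) \<le> card {u\<in>set us. u < w}"
    by (rule card_mono[OF _ L]) simp
  ultimately have c1: "m - 1 \<le> card {u\<in>set us. u < w}" by simp
  have "card ((\<lambda>t. ps ! (i t)) ` {m<..k}) = k - m"
    using inj m by (subst card_image) (auto intro: inj_on_subset)
  moreover have "card ((\<lambda>t. ps ! (i t)) ` {m<..k}) \<le> card {u\<in>set vs. u < w}"
    by (rule card_mono[OF _ R]) simp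
  ultimately have c2: "k - m \<le> card {u\<in>set vs. u < w}" by simp
  show ?thesis unfolding Bad_def using eq c1 c2 by blast
qed

lemma char2:
  assumes m: "1 \<le> m" "m \<le> k" and B: "Bad (m - 1) (k - m) ps"
  shows "contains_pop ps k ({m} \<times> ({1..k} - {m}))"
proof -
  obtain us w vs where eq: "ps = us @ w # vs" and c1: "m - 1 \<le> card {u\<in>set us. u < w}"
    and c2: "k - m \<le> card {u\<in>set vs. u < w}" using B unfolding Bad_def by blast
  define LI where "LI = {t. t < length us \<and> us ! t < w}"
  define RI where "RI = {t. t < length vs \<and> vs ! t < w}"
  have "{u\<in>set us. u < w} = (!) us ` LI" unfolding LI_def by (auto simp: in_set_conv_nth)
  hence "card {u\<in>set us. u < w} \<le> card LI" by (metis card_image_le finite_Collect_conjI finite_Collect_less_nat LI_def)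
  hence cL: "m - 1 \<le> card LI" using c1 by simp
  have "{u\<in>set vs. u < w} = (!) vs ` RI" unfolding RI_def by (auto simp: in_set_conv_nth)
  hence "card {u\<in>set vs. u < w} \<le> card RI" by (metis card_image_le finite_Collect_conjI finite_Collect_less_nat RI_def)
  hence cR: "k - m \<le> card RI" using c2 by simp
  have fL: "finite LI" "finite RI" unfolding LI_def RI_def by auto
  define fl where "fl = sorted_list_of_set LI"
  define gl where "gl = sorted_list_of_set RI"
  have lfl: "length fl = card LI" and lgl: "length gl = card RI" unfolding fl_def gl_def by auto
  have sfl: "sorted_wrt (<) fl" and sgl: "sorted_wrt (<) gl" unfolding fl_def gl_def
    by (auto intro: strict_sorted_list_of_set)
  have fin: "\<And>q. q < length fl \<Longrightarrow> fl ! q < length us \<and> us ! (fl ! q) < w"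
  proof -
    fix q assume "q < length fl"
    hence "fl ! q \<in> LI" using fL unfolding fl_def by (metis nth_mem set_sorted_list_of_set)
    thus "fl ! q < length us \<and> us ! (fl ! q) < w" unfolding LI_def by simp
  qed
  have gin: "\<And>q. q < length gl \<Longrightarrow> gl ! q < length vs \<and> vs ! (gl ! q) < w"
  proof -
    fix q assume "q < length gl"
    hence "gl ! q \<in> RI" using fL unfolding gl_def by (metis nth_mem set_sorted_list_of_set)
    thus "gl ! q < length vs \<and> vs ! (gl ! q) < w" unfolding RI_def by simp
  qed
  define i where "i x = (if x < m then fl ! (x - 1) else if x = m then length us
      else length us + 1 + gl ! (x - m - 1))" for x
  have iL: "\<And>x. 1 \<le> x \<Longrightarrow> x < m \<Longrightarrow> i x < length us \<and> ps ! (i x) < w"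
  proof -
    fix x assume "1 \<le> x" "x < m"
    hence "x - 1 < length fl" using cL lfl by linarith
    thus "i x < length us \<and> ps ! (i x) < w" using fin[of "x - 1"] \<open>x < m\<close>
      unfolding i_def eq by (simp add: nth_append)
  qed
  have iR: "\<And>x. m < x \<Longrightarrow> x \<le> k \<Longrightarrow> length us < i x \<and> i x < length ps \<and> ps ! (i x) < w"
  proof -
    fix x assume "m < x" "x \<le> k"
    hence "x - m - 1 < length gl" using cR lgl by linarith
    thus "length us < i x \<and> i x < length ps \<and> ps ! (i x) < w" using gin[of "x - m - 1"] \<open>m < x\<close>
      unfolding i_def eq by (simp add: nth_append)
  qed
  have im: "i m = length us" "ps ! (i m) = w" unfolding i_def eq by simp_all
  have sm: "strict_mono_on {1..k} i"
  proof (rule strict_mono_onI)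
    fix x y assume xy: "x \<in> {1..k}" "y \<in> {1..k}" "x < y"
    consider "y < m" | "y = m" | "m < y" by linarith
    thus "i x < i y"
    proof cases
      case 1
      hence "y - 1 < length fl" using cL lfl xy by linarith
      hence "fl ! (x - 1) < fl ! (y - 1)" using sorted_wrt_nth_less[OF sfl, of "x - 1" "y - 1"] xy by simp
      thus ?thesis using 1 xy unfolding i_def by simp
    next
      case 2
      thus ?thesis using iL[of x] im xy by simp
    next
      case 3
      note yR = this
      consider "x < m" | "x = m" | "m < x" by linarith
      thus ?thesis
      proof cases
        case 1 thus ?thesis using iL[of x] iR[of y] xy yR by force
      next
        case 2 thus ?thesis using iR[of y] im xy yR by simp
      next
        case 3
        note xR = this
        have "y \<le> k" using xy by simp
        hence "y - m - 1 < length gl" using cR lgl xR xy(3) by linarith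
        hence "gl ! (x - m - 1) < gl ! (y - m - 1)" using sorted_wrt_nth_less[OF sgl, of "x - m - 1" "y - m - 1"] xy xR by simp
        thus ?thesis using yR xR xy unfolding i_def by simp
      qed
    qed
  qed
  have lt: "\<forall>x\<in>{1..k}. i x < length ps"
  proof
    fix x assume x: "x \<in> {1..k}"
    consider "x < m" | "x = m" | "m < x" by linarith
    thus "i x < length ps" using iL[of x] iR[of x] im x unfolding eq by (cases; force)
  qed
  have rel: "\<forall>(x, y)\<in>{m} \<times> ({1..k} - {m}). ps ! (i x) > ps ! (i y)"
  proof -
    have "\<forall>y\<in>{1..k}-{m}. ps ! (i y) < ps ! (i m)"
    proof
      fix y assume y: "y \<in> {1..k}-{m}"
      hence "y < m \<or> m < y" by auto
      thus "ps ! (i y) < ps ! (i m)" using iL[of y] iR[of y] im y by auto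
    qed
    thus ?thesis by auto
  qed
  show ?thesis unfolding contains_pop_def using sm lt rel by blast
qed

lemma split3:
  assumes "us @ w # vs = xs @ v # ys"
  shows "(\<exists>zs. xs = us @ w # zs \<and> vs = zs @ v # ys) \<or> (us = xs \<and> w = v \<and> vs = ys)
    \<or> (\<exists>zs. us = xs @ v # zs \<and> ys = zs @ w # vs)"
  using assms by (auto simp: append_eq_append_conv2 Cons_eq_append_conv append_eq_Cons_conv)

lemma split2:
  assumes "us @ w # vs = xs @ ys"
  shows "(\<exists>zs. xs = us @ w # zs \<and> vs = zs @ ys) \<or> (\<exists>zs. us = xs @ zs \<and> ys = zs @ w # vs)"
  using assms by (auto simp: append_eq_append_conv2 Cons_eq_append_conv append_eq_Cons_conv)

lemma bad_ins:
  assumes lt: "\<forall>u\<in>set xs \<union> set ys. u < v" and d: "distinct (xs @ ys)"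
  shows "Bad a b (xs @ v # ys) \<longleftrightarrow> Bad a b (xs @ ys) \<or> (a \<le> length xs \<and> b \<le> length ys)"
proof
  assume "Bad a b (xs @ v # ys)"
  then obtain us w vs where eq: "us @ w # vs = xs @ v # ys" and c1: "a \<le> card {u\<in>set us. u < w}"
    and c2: "b \<le> card {u\<in>set vs. u < w}" unfolding Bad_def by metis
  from split3[OF eq] show "Bad a b (xs @ ys) \<or> (a \<le> length xs \<and> b \<le> length ys)"
  proof (elim disjE exE conjE)
    fix zs assume 1: "xs = us @ w # zs" "vs = zs @ v # ys"
    have "w < v" using lt 1 by auto
    hence "{u\<in>set vs. u < w} = {u\<in>set (zs @ ys). u < w}" using 1 by auto
    hence "xs @ ys = us @ w # (zs @ ys) \<and> a \<le> card {u\<in>set us. u < w} \<and> b \<le> card {u\<in>set (zs @ ys). u < w}"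
      using 1 c1 c2 by simp
    thus ?thesis unfolding Bad_def by blast
  next
    assume 2: "us = xs" "w = v" "vs = ys"
    have "{u\<in>set us. u < w} = set xs" "{u\<in>set vs. u < w} = set ys" using 2 lt by auto
    thus ?thesis using c1 c2 d by (simp add: distinct_card)
  next
    fix zs assume 3: "us = xs @ v # zs" "ys = zs @ w # vs"
    have "w < v" using lt 3 by auto
    hence "{u\<in>set us. u < w} = {u\<in>set (xs @ zs). u < w}" using 3 by auto
    hence "xs @ ys = (xs @ zs) @ w # vs \<and> a \<le> card {u\<in>set (xs @ zs). u < w} \<and> b \<le> card {u\<in>set vs. u < w}"
      using 3 c1 c2 by simp
    thus ?thesis unfolding Bad_def by blast
  qed
next
  assume "Bad a b (xs @ ys) \<or> (a \<le> length xs \<and> b \<le> length ys)"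
  thus "Bad a b (xs @ v # ys)"
  proof
    assume "Bad a b (xs @ ys)"
    then obtain us w vs where eq: "us @ w # vs = xs @ ys" and c1: "a \<le> card {u\<in>set us. u < w}"
      and c2: "b \<le> card {u\<in>set vs. u < w}" unfolding Bad_def by metis
    have "w \<in> set xs \<union> set ys" using eq by (metis in_set_conv_decomp set_append)
    hence wv: "w < v" using lt by auto
    from split2[OF eq] show ?thesis
    proof (elim disjE exE conjE)
      fix zs assume 1: "xs = us @ w # zs" "vs = zs @ ys"
      hence "{u\<in>set vs. u < w} = {u\<in>set (zs @ v # ys). u < w}" using wv by auto
      hence "xs @ v # ys = us @ w # (zs @ v # ys) \<and> a \<le> card {u\<in>set us. u < w} \<and> b \<le> card {u\<in>set (zs @ v # ys). u < w}"
        using 1 c1 c2 by simp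
      thus ?thesis unfolding Bad_def by blast
    next
      fix zs assume 2: "us = xs @ zs" "ys = zs @ w # vs"
      hence "{u\<in>set us. u < w} = {u\<in>set (xs @ v # zs). u < w}" using wv by auto
      hence "xs @ v # ys = (xs @ v # zs) @ w # vs \<and> a \<le> card {u\<in>set (xs @ v # zs). u < w} \<and> b \<le> card {u\<in>set vs. u < w}"
        using 2 c1 c2 by simp
      thus ?thesis unfolding Bad_def by blast
    qed
  next
    assume c: "a \<le> length xs \<and> b \<le> length ys"
    have "{u\<in>set xs. u < v} = set xs" "{u\<in>set ys. u < v} = set ys" using lt by auto
    hence "xs @ v # ys = xs @ v # ys \<and> a \<le> card {u\<in>set xs. u < v} \<and> b \<le> card {u\<in>set ys. u < v}"
      using c d by (simp add: distinct_card)
    thus ?thesis unfolding Bad_def by blast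
  qed
qed

definition ins :: "nat \<Rightarrow> nat list \<times> nat \<Rightarrow> nat list" where
  "ins v = (\<lambda>(\<sigma>, j). take j \<sigma> @ v # drop j \<sigma>)"

lemma ins_inj: "inj_on (ins (Suc n)) (permutations_of_set {1..n} \<times> {0..n})"
proof (rule inj_onI, clarify)
  fix \<sigma> j \<sigma>' j'
  assume s: "\<sigma> \<in> permutations_of_set {1..n}" "j \<in> {0..n}" "\<sigma>' \<in> permutations_of_set {1..n}" "j' \<in> {0..n}"
    and e: "ins (Suc n) (\<sigma>, j) = ins (Suc n) (\<sigma>', j')"
  have nv: "Suc n \<notin> set \<sigma>" "Suc n \<notin> set \<sigma>'" using s by (auto simp: permutations_of_set_def)
  hence nv2: "Suc n \<notin> set (take j \<sigma>)" "Suc n \<notin> set (take j' \<sigma>')"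
    by (meson in_set_takeD)+
  from e have "take j \<sigma> @ Suc n # drop j \<sigma> = take j' \<sigma>' @ Suc n # drop j' \<sigma>'" by (simp add: ins_def)
  from split3[OF this] have "take j \<sigma> = take j' \<sigma>' \<and> drop j \<sigma> = drop j' \<sigma>'"
  proof (elim disjE exE conjE)
    fix zs assume "take j' \<sigma>' = take j \<sigma> @ Suc n # zs"
    hence "Suc n \<in> set (take j' \<sigma>')" by simp
    thus ?thesis using nv2 by blast
  next
    fix zs assume "take j \<sigma> = take j' \<sigma>' @ Suc n # zs"
    hence "Suc n \<in> set (take j \<sigma>)" by simp
    thus ?thesis using nv2 by blast
  qed simp
  note td = this
  have len: "\<And>\<tau>. \<tau> \<in> permutations_of_set {1..n} \<Longrightarrow> length \<tau> = n"
  proof -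
    fix \<tau> assume "\<tau> \<in> permutations_of_set {1..n}"
    hence "set \<tau> = {1..n}" "distinct \<tau>" by (simp_all add: permutations_of_set_def)
    hence "length \<tau> = card {1..n}" by (metis distinct_card)
    thus "length \<tau> = n" by simp
  qed
  have "\<sigma> = \<sigma>'" using td by (metis append_take_drop_id)
  moreover have "j = length (take j \<sigma>)" "j' = length (take j' \<sigma>')" using s len[of \<sigma>] len[of \<sigma>'] by auto
  moreover have "length (take j \<sigma>) = length (take j' \<sigma>')" using td by simp
  ultimately show "\<sigma> = \<sigma>' \<and> j = j'" by simp
qed

lemma distinct_ins: "distinct (xs @ v # ys) \<longleftrightarrow> distinct (xs @ ys) \<and> v \<notin> set xs \<union> set ys"
  by auto

lemma ins_image: "permutations_of_set {1..Suc n} = ins (Suc n) ` (permutations_of_set {1..n} \<times> {0..n})"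
proof
  show "ins (Suc n) ` (permutations_of_set {1..n} \<times> {0..n}) \<subseteq> permutations_of_set {1..Suc n}"
  proof clarify
    fix \<sigma> j assume s: "\<sigma> \<in> permutations_of_set {1..n}" "j \<in> {0..n}"
    have "set (take j \<sigma> @ Suc n # drop j \<sigma>) = insert (Suc n) (set \<sigma>)"
      by (metis Un_insert_right append_take_drop_id list.simps(15) set_append)
    moreover have "distinct (take j \<sigma> @ Suc n # drop j \<sigma>)"
    proof -
      have ds: "distinct \<sigma>" "Suc n \<notin> set \<sigma>" using s by (auto simp: permutations_of_set_def)
      hence "distinct (take j \<sigma> @ drop j \<sigma>) \<and> Suc n \<notin> set (take j \<sigma>) \<union> set (drop j \<sigma>)"
        by (metis append_take_drop_id set_append)
      thus ?thesis by (rule distinct_ins[THEN iffD2])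
    qed
    moreover have "insert (Suc n) (set \<sigma>) = {1..Suc n}" using s by (auto simp: permutations_of_set_def)
    ultimately show "ins (Suc n) (\<sigma>, j) \<in> permutations_of_set {1..Suc n}"
      unfolding ins_def permutations_of_set_def by simp
  qed
next
  show "permutations_of_set {1..Suc n} \<subseteq> ins (Suc n) ` (permutations_of_set {1..n} \<times> {0..n})"
  proof
    fix \<pi> assume p: "\<pi> \<in> permutations_of_set {1..Suc n}"
    hence "Suc n \<in> set \<pi>" by (simp add: permutations_of_set_def)
    then obtain xs ys where eq: "\<pi> = xs @ Suc n # ys" by (meson split_list)
    have d: "distinct (xs @ ys)" "Suc n \<notin> set xs \<union> set ys" using p eq distinct_ins[of xs "Suc n" ys]
      by (simp_all add: permutations_of_set_def)
    have "set (xs @ ys) = set \<pi> - {Suc n}" using eq d(2) by auto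
    also have "set \<pi> = {1..Suc n}" using p by (simp add: permutations_of_set_def)
    also have "{1..Suc n} - {Suc n} = {1..n}" by auto
    finally have "set (xs @ ys) = {1..n}" .
    hence sp: "xs @ ys \<in> permutations_of_set {1..n}" using d by (simp add: permutations_of_set_def)
    have "length (xs @ ys) = card (set (xs @ ys))" using d(1) by (simp only: distinct_card)
    also have "\<dots> = n" using \<open>set (xs @ ys) = {1..n}\<close> by simp
    finally have "length (xs @ ys) = n" .
    hence "length xs \<in> {0..n}" by simp
    moreover have "\<pi> = ins (Suc n) (xs @ ys, length xs)" using eq by (simp add: ins_def)
    ultimately show "\<pi> \<in> ins (Suc n) ` (permutations_of_set {1..n} \<times> {0..n})" using sp
      by (intro rev_image_eqI[of "(xs @ ys, length xs)"]) (simp_all only: mem_Times_iff fst_conv snd_conv)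
  qed
qed

lemma avoid_char:
  assumes "1 \<le> m" "m \<le> k" "distinct ps"
  shows "contains_pop ps k ({m} \<times> ({1..k} - {m})) \<longleftrightarrow> Bad (m - 1) (k - m) ps"
  using char1[of ps m k] char2[of m k ps] assms by blast

lemma image_filter: "{y \<in> f ` D. P y} = f ` {x\<in>D. P (f x)}"
  by auto

lemma cardG:
  assumes "a + b = k - 1"
  shows "card {j\<in>{0..n}. \<not> (a \<le> j \<and> b \<le> n - j)} = (if Suc n < k then Suc n else k - 1)"
proof (cases "Suc n < k")
  case True
  hence "{j\<in>{0..n}. \<not> (a \<le> j \<and> b \<le> n - j)} = {0..n}" using assms by auto
  thus ?thesis using True by simp
next
  case False
  hence "{j\<in>{0..n}. \<not> (a \<le> j \<and> b \<le> n - j)} = {..<a} \<union> {n + 1 - b..n}" using assms by auto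
  moreover have "{..<a} \<inter> {n + 1 - b..n} = {}" using False assms by auto
  ultimately have "card {j\<in>{0..n}. \<not> (a \<le> j \<and> b \<le> n - j)} = a + b"
    using False assms by (simp add: card_Un_disjoint)
  thus ?thesis using False assms by simp
qed

lemma recur:
  assumes m: "1 \<le> m" "m \<le> k" and R: "R = {m} \<times> ({1..k} - {m})"
  shows "card (avoiders (Suc n) k R) = card (avoiders n k R) * (if Suc n < k then Suc n else k - 1)"
proof -
  define G where "G = {j\<in>{0..n}. \<not> (m - 1 \<le> j \<and> k - m \<le> n - j)}"
  define D where "D = permutations_of_set {1..n} \<times> {0..n}"
  have key: "\<And>x. x \<in> D \<Longrightarrow> (\<not> contains_pop (ins (Suc n) x) k R) \<longleftrightarrow> x \<in> avoiders n k R \<times> G"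
  proof -
    fix x assume x: "x \<in> D"
    obtain \<sigma> j where xe: "x = (\<sigma>, j)" by fastforce
    have s: "set \<sigma> = {1..n}" "distinct \<sigma>" "j \<le> n" using x xe by (auto simp: D_def permutations_of_set_def)
    have len: "length \<sigma> = n" using s by (metis card_atLeastAtMost diff_Suc_1 distinct_card)
    have d1: "distinct (take j \<sigma> @ drop j \<sigma>)" using s by simp
    have lt: "\<forall>u\<in>set (take j \<sigma>) \<union> set (drop j \<sigma>). u < Suc n"
      by (metis append_take_drop_id atLeastAtMost_iff le_imp_less_Suc s(1) set_append)
    have dI: "distinct (ins (Suc n) x)" using d1 lt distinct_ins[of "take j \<sigma>" "Suc n" "drop j \<sigma>"]
      by (auto simp: xe ins_def)
    have "contains_pop (ins (Suc n) x) k R \<longleftrightarrow> Bad (m - 1) (k - m) (ins (Suc n) x)"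
      using avoid_char[OF m dI] R by simp
    also have "\<dots> \<longleftrightarrow> Bad (m - 1) (k - m) \<sigma> \<or> (m - 1 \<le> j \<and> k - m \<le> n - j)"
      using bad_ins[OF lt d1, of "m - 1" "k - m"] len s by (simp add: xe ins_def)
    also have "Bad (m - 1) (k - m) \<sigma> \<longleftrightarrow> contains_pop \<sigma> k R"
      using avoid_char[OF m s(2)] R by simp
    finally show "(\<not> contains_pop (ins (Suc n) x) k R) \<longleftrightarrow> x \<in> avoiders n k R \<times> G"
      using x s xe by (auto simp: avoiders_def G_def D_def)
  qed
  have sub: "avoiders n k R \<times> G \<subseteq> D" by (auto simp: avoiders_def G_def D_def)
  have "avoiders (Suc n) k R = {y \<in> ins (Suc n) ` D. \<not> contains_pop y k R}"
    unfolding avoiders_def D_def ins_image ..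
  also have "\<dots> = ins (Suc n) ` {x\<in>D. \<not> contains_pop (ins (Suc n) x) k R}" by (rule image_filter)
  also have "{x\<in>D. \<not> contains_pop (ins (Suc n) x) k R} = avoiders n k R \<times> G"
    using key sub by blast
  finally have eq: "avoiders (Suc n) k R = ins (Suc n) ` (avoiders n k R \<times> G)" .
  have "inj_on (ins (Suc n)) (avoiders n k R \<times> G)"
    using inj_on_subset[OF ins_inj sub[unfolded D_def]] .
  hence "card (avoiders (Suc n) k R) = card (avoiders n k R) * card G"
    unfolding eq by (simp add: card_image card_cartesian_product)
  moreover have "card G = (if Suc n < k then Suc n else k - 1)"
    unfolding G_def by (rule cardG) (use m in simp)
  ultimately show ?thesis by simp
qed

lemma base:
  assumes m: "1 \<le> m" "m \<le> k" and R: "R = {m} \<times> ({1..k} - {m})"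
  shows "card (avoiders 0 k R) = 1"
proof -
  have "\<not> Bad (m - 1) (k - m) []" unfolding Bad_def by simp
  hence "\<not> contains_pop [] k R" using avoid_char[OF m, of "[]"] R by simp
  hence "avoiders 0 k R = {[]}" by (auto simp: avoiders_def)
  thus ?thesis by simp
qed

lemma closed:
  assumes m: "1 \<le> m" "m \<le> k" and R: "R = {m} \<times> ({1..k} - {m})"
  shows "card (avoiders n k R) = (if n < k then fact n else fact (k - 1) * (k - 1) ^ (n - k + 1))"
proof (induction n)
  case 0
  thus ?case using base[OF assms] m by simp
next
  case (Suc n)
  note r = recur[OF assms, of n]
  consider "Suc n < k" | "Suc n = k" | "Suc n > k" by linarith
  thus ?case
  proof cases
    case 1 thus ?thesis using r Suc by (simp add: fact_Suc mult.commute)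
  next
    case 2
    hence "k - 1 = n" by simp
    thus ?thesis using r Suc 2 by simp
  next
    case 3
    hence "n - k + 1 = Suc (n - k)" "Suc n - k + 1 = Suc (Suc (n - k))" by auto
    thus ?thesis using r Suc 3 by (simp add: mult.commute mult.left_commute)
  qed
qed

theorem theorem2p2:
  fixes k :: nat and xs :: "nat list"
  assumes "k \<ge> 1"
    and "xs \<in> permutations_of_set {1..k}"
  defines "R \<equiv> {(xs ! 0, xs ! (j - 1)) | j. 2 \<le> j \<and> j \<le> k}"
  shows "\<forall>n::nat. card (avoiders n k R) =
           (if n < k then fact n else fact (k - 1) * (k - 1) ^ (n - k + 1))"
proof
  fix n :: nat
  have sx: "set xs = {1..k}" "distinct xs" using assms(2) by (simp_all add: permutations_of_set_def)
  have "length xs = card (set xs)" using sx(2) by (simp only: distinct_card)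
  hence lx: "length xs = k" using sx(1) by simp
  define m where "m = xs ! 0"
  have "m \<in> set xs" unfolding m_def using lx assms(1) by simp
  hence m: "1 \<le> m" "m \<le> k" using sx by auto
  have "R = {m} \<times> ({1..k} - {m})"
  proof
    show "R \<subseteq> {m} \<times> ({1..k} - {m})"
    proof
      fix z assume "z \<in> R"
      then obtain j where j: "z = (xs ! 0, xs ! (j - 1))" "2 \<le> j" "j \<le> k" unfolding R_def by blast
      have "j - 1 < length xs" using j lx by simp
      hence "xs ! (j - 1) \<in> set xs" by (rule nth_mem)
      hence "xs ! (j - 1) \<in> {1..k}" using sx by simp
      moreover have "xs ! (j - 1) \<noteq> xs ! 0"
      proof
        assume "xs ! (j - 1) = xs ! 0"
        moreover have "j - 1 < length xs" "0 < length xs" using j lx by simp_all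
        ultimately have "j - 1 = 0" using nth_eq_iff_index_eq[OF sx(2)] by blast
        thus False using j by simp
      qed
      ultimately show "z \<in> {m} \<times> ({1..k} - {m})" using j m_def by auto
    qed
  next
    show "{m} \<times> ({1..k} - {m}) \<subseteq> R"
    proof
      fix z assume "z \<in> {m} \<times> ({1..k} - {m})"
      then obtain y where y: "y \<in> {1..k}" "y \<notin> {m}" and ze: "z = (m, y)" by blast
      hence "y \<in> set xs" using sx by simp
      then obtain t where t: "t < length xs" "y = xs ! t" by (auto simp: in_set_conv_nth)
      hence t: "t < k" "y = xs ! t" using lx by simp_all
      have "t \<noteq> 0"
      proof
        assume "t = 0" thus False using t y m_def by simp
      qed
      hence "(m, y) = (xs ! 0, xs ! (Suc t - 1)) \<and> 2 \<le> Suc t \<and> Suc t \<le> k" using t m_def by simp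
      thus "z \<in> R" unfolding R_def ze by blast
    qed
  qed
  thus "card (avoiders n k R) = (if n < k then fact n else fact (k - 1) * (k - 1) ^ (n - k + 1))"
    by (rule closed[OF m])
qed

end
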